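(* Let $f\ge1$. The group $G=\mathfrak{S}_2\times\mathfrak{S}_{f+1}$, acting on $\mathbb{R}^2\times\mathbb{R}^{f+1}$ by permuting coordinates within each factor, acts on the vertices of the sweep polytope $\mathcal{L}(\Delta_1\times\Delta_f)$, and the number of orbits of vertices equals the Catalan number $C_{f+1}=\frac{1}{f+2}\binom{2f+2}{f+1}$ (the number of standard Young tableaux of shape $2\times(f+1)$).
   Context: $\Delta_{k}=\operatorname{conv}\{\mathbf{e}_1,\dots,\mathbf{e}_{k+1}\}\subset\mathbb{R}^{k+1}$. For a point configuration $\mathbf{A}=\{\mathbf{v}_1,\dots,\mathbf{v}_n\}$ (here the vertex set of $\Delta_1\times\Delta_f$, $n=2(f+1)$) and weights $w_1>\dots>w_n>0$, $\sum w_i=1$, the sweep polytope is $\mathcal{L}(\mathbf{A})=\operatorname{conv}\{\sum_i w_i\mathbf{v}_{\sigma(i)}:\sigma\in\mathfrak{S}_n\}$; its vertices are exactly the points $\sum_i w_i\mathbf{v}_{\sigma(i)}$ for orderings $\sigma$ induced (in decreasing order of value) by linear functionals injective on $\mathbf{A}$ (sweeps). *)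

theory Defs
  imports "HOL-Analysis.Analysis"
begin

text \<open>Vertex set of the product of simplices Delta_1 x Delta_f, realised in
  R^2 x R^(f+1) with f + 1 = CARD('m).\<close>
definition prod_simplex_vertices :: "((real^2) \<times> (real^('m::finite))) set" where
  "prod_simplex_vertices = {(axis i 1, axis j 1) | i j. True}"

definition sweep_polytope :: "'a::real_vector set \<Rightarrow> (nat \<Rightarrow> real) \<Rightarrow> 'a set" where
  "sweep_polytope A w = convex hull
     {(\<Sum>i<card A. w i *\<^sub>R p i) | p. bij_betw p {..<card A} A}"

definition admissible_weights :: "nat \<Rightarrow> (nat \<Rightarrow> real) \<Rightarrow> bool" where
  "admissible_weights n w \<longleftrightarrow>
     (\<forall>i j. i < j \<and> j < n \<longrightarrow> w j < w i) \<and> (\<forall>i<n. 0 < w i) \<and> (\<Sum>i<n. w i) = 1"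

definition perm_act :: "((2 \<Rightarrow> 2) \<times> ('m::finite \<Rightarrow> 'm)) \<Rightarrow> (real^2) \<times> (real^'m) \<Rightarrow> (real^2) \<times> (real^'m)" where
  "perm_act g x = ((\<chi> i. fst x $ fst g i), (\<chi> j. snd x $ snd g j))"

definition perm_group :: "((2 \<Rightarrow> 2) \<times> ('m::finite \<Rightarrow> 'm)) set" where
  "perm_group = {(s, t). s permutes UNIV \<and> t permutes UNIV}"

definition catalan :: "nat \<Rightarrow> real" where
  "catalan m = real (2 * m choose m) / real (m + 1)"

end

theory Submission
  imports Defs
begin


lemma prefix_sum_le:
  fixes f :: "'a \<Rightarrow> real" and N k :: nat
  assumes fin: "finite A" and p: "bij_betw p {..<N} A" and q: "bij_betw q {..<N} A"
    and dec: "\<And>i j. i < j \<Longrightarrow> j < N \<Longrightarrow> f (p j) < f (p i)"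
    and k: "k < N"
  shows "(\<Sum>i\<le>k. f (q i)) \<le> (\<Sum>i\<le>k. f (p i))"
    and "q ` {..k} \<noteq> p ` {..k} \<Longrightarrow> (\<Sum>i\<le>k. f (q i)) < (\<Sum>i\<le>k. f (p i))"
proof -
  define P where "P = p ` {..k}"
  define Q where "Q = q ` {..k}"
  have injp: "inj_on p {..k}" using k by (intro inj_on_subset[OF bij_betw_imp_inj_on[OF p]]) (auto simp: less_Suc_eq_le order_le_less_trans)
  have injq: "inj_on q {..k}" using k by (intro inj_on_subset[OF bij_betw_imp_inj_on[OF q]]) (auto simp: order_le_less_trans)
  have sp: "(\<Sum>i\<le>k. f (p i)) = sum f P" unfolding P_def using sum.reindex[OF injp, of f] by (simp add: comp_def)
  have sq: "(\<Sum>i\<le>k. f (q i)) = sum f Q" unfolding Q_def using sum.reindex[OF injq, of f] by (simp add: comp_def)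
  have cP: "card P = Suc k" unfolding P_def using card_image[OF injp] by simp
  have cQ: "card Q = Suc k" unfolding Q_def using card_image[OF injq] by simp
  have PA: "P \<subseteq> A" unfolding P_def using p k by (auto simp: bij_betw_def)
  have QA: "Q \<subseteq> A" unfolding Q_def using q k by (auto simp: bij_betw_def)
  have finP: "finite P" "finite Q" using PA QA fin finite_subset by auto
  have hiP: "\<And>u. u \<in> P \<Longrightarrow> f (p k) \<le> f u"
  proof -
    fix u assume "u \<in> P" then obtain j where "j \<le> k" "u = p j" unfolding P_def by auto
    then show "f (p k) \<le> f u" using dec[of j k] k by (cases "j = k") auto
  qed
  have loQ: "\<And>u. u \<in> Q - P \<Longrightarrow> f u < f (p k)"
  proof -
    fix u assume u: "u \<in> Q - P"
    then have "u \<in> A" using QA by auto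
    then obtain j where j: "j < N" "u = p j" using p by (auto simp: bij_betw_def)
    have "\<not> j \<le> k" using u j unfolding P_def by auto
    then show "f u < f (p k)" using dec[of k j] j by auto
  qed
  have cd: "card (Q - P) = card (P - Q)"
  proof -
    have "card (Q - P) = card Q - card (Q \<inter> P)" using finP by (simp add: card_Diff_subset_Int Diff_Int2 card_Diff_subset inf.commute)
    moreover have "card (P - Q) = card P - card (P \<inter> Q)" using finP by (simp add: card_Diff_subset_Int Diff_Int2 card_Diff_subset)
    ultimately show ?thesis using cP cQ by (simp add: Int_commute)
  qed
  have s1: "sum f Q = sum f (Q \<inter> P) + sum f (Q - P)"
    using finP by (metis sum.Int_Diff)
  have s2: "sum f P = sum f (Q \<inter> P) + sum f (P - Q)"
    using finP by (metis sum.Int_Diff Int_commute)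
  have a1: "sum f (Q - P) \<le> real (card (Q - P)) * f (p k)"
    using sum_bounded_above[of "Q - P" f "f (p k)"] loQ by fastforce
  have a2: "real (card (P - Q)) * f (p k) \<le> sum f (P - Q)"
    using sum_bounded_below[of "P - Q" "f (p k)" f] hiP by fastforce
  have a2': "real (card (Q - P)) * f (p k) \<le> sum f (P - Q)" using a2 cd by simp
  show "(\<Sum>i\<le>k. f (q i)) \<le> (\<Sum>i\<le>k. f (p i))"
    using a1 a2' s1 s2 sp sq by linarith
  assume ne: "q ` {..k} \<noteq> p ` {..k}"
  have "Q - P \<noteq> {}"
  proof
    assume "Q - P = {}"
    then have "Q \<subseteq> P" by auto
    then have "Q = P" using cP cQ finP by (simp add: card_subset_eq)
    then show False using ne P_def Q_def by simp
  qed
  then have a1': "sum f (Q - P) < real (card (Q - P)) * f (p k)"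
    using sum_strict_mono[of "Q - P" f "\<lambda>_. f (p k)"] loQ finP by auto
  show "(\<Sum>i\<le>k. f (q i)) < (\<Sum>i\<le>k. f (p i))"
    using a1' a2' s1 s2 sp sq by linarith
qed

lemma abel_sum:
  fixes u a :: "nat \<Rightarrow> real"
  shows "(\<Sum>i<n. u i * a i) = (\<Sum>k<n. (u k - u (Suc k)) * (\<Sum>i\<le>k. a i)) + u n * (\<Sum>i<n. a i)"
proof (induction n)
  case 0 then show ?case by simp
next
  case (Suc n)
  have "(\<Sum>i\<le>n. a i) = (\<Sum>i<n. a i) + a n" by (simp add: lessThan_Suc_atMost[symmetric])
  then show ?case using Suc by (simp add: algebra_simps)
qed

lemma rearrangement:
  fixes f :: "'a \<Rightarrow> real" and w :: "nat \<Rightarrow> real" and N :: nat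
  assumes fin: "finite A" and p: "bij_betw p {..<N} A" and q: "bij_betw q {..<N} A"
    and dec: "\<And>i j. i < j \<Longrightarrow> j < N \<Longrightarrow> f (p j) < f (p i)"
    and wdec: "\<And>i j. i < j \<Longrightarrow> j < N \<Longrightarrow> w j < w i"
    and wpos: "\<And>i. i < N \<Longrightarrow> 0 < w i"
  shows "(\<Sum>i<N. w i * f (q i)) \<le> (\<Sum>i<N. w i * f (p i))"
    and "\<exists>i<N. q i \<noteq> p i \<Longrightarrow> (\<Sum>i<N. w i * f (q i)) < (\<Sum>i<N. w i * f (p i))"
proof -
  define u where "u k = (if k < N then w k else 0)" for k
  have dpos: "0 < u k - u (Suc k)" if "k < N" for k
    using that wdec[of k "Suc k"] wpos[of k] by (auto simp: u_def)
  have eq: "(\<Sum>i<N. w i * a i) = (\<Sum>k<N. (u k - u (Suc k)) * (\<Sum>i\<le>k. a i))" for a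
  proof -
    have "(\<Sum>i<N. w i * a i) = (\<Sum>i<N. u i * a i)" by (intro sum.cong) (auto simp: u_def)
    also have "\<dots> = (\<Sum>k<N. (u k - u (Suc k)) * (\<Sum>i\<le>k. a i))"
      using abel_sum[of u a N] by (simp add: u_def)
    finally show ?thesis .
  qed
  have le: "(u k - u (Suc k)) * (\<Sum>i\<le>k. f (q i)) \<le> (u k - u (Suc k)) * (\<Sum>i\<le>k. f (p i))"
    if "k \<in> {..<N}" for k
    using prefix_sum_le(1)[where f=f, OF fin p q dec, of k] dpos[of k] that
    by (intro mult_left_mono) auto
  show "(\<Sum>i<N. w i * f (q i)) \<le> (\<Sum>i<N. w i * f (p i))"
    unfolding eq by (intro sum_mono le)
  assume "\<exists>i<N. q i \<noteq> p i"
  then have "\<exists>i. i < N \<and> q i \<noteq> p i" by auto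
  define k where "k = (LEAST i. i < N \<and> q i \<noteq> p i)"
  have k: "k < N" "q k \<noteq> p k" using LeastI_ex[OF \<open>\<exists>i. i < N \<and> q i \<noteq> p i\<close>] unfolding k_def by auto
  have before: "q j = p j" if "j < k" for j
  proof (rule ccontr)
    assume "q j \<noteq> p j"
    moreover have "j < N" using that k(1) by simp
    ultimately have "k \<le> j" unfolding k_def by (intro Least_le) auto
    with that show False by simp
  qed
  have "q ` {..k} \<noteq> p ` {..k}"
  proof
    assume h: "q ` {..k} = p ` {..k}"
    have "q k \<in> p ` {..k}" using h by auto
    then obtain j where j: "j \<le> k" "q k = p j" by auto
    show False
    proof (cases "j = k")
      case True then show False using j k by simp
    next
      case False
      then have "j < k" using j by simp
      then have "q j = p j" using before by simp
      then have "q j = q k" using j by simp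
      moreover have "inj_on q {..<N}" using q by (simp add: bij_betw_def)
      ultimately show False using \<open>j < k\<close> k by (auto dest: inj_onD)
    qed
  qed
  then have lt: "(u k - u (Suc k)) * (\<Sum>i\<le>k. f (q i)) < (u k - u (Suc k)) * (\<Sum>i\<le>k. f (p i))"
    using prefix_sum_le(2)[where f=f, OF fin p q dec k(1)] dpos[OF k(1)] by simp
  show "(\<Sum>i<N. w i * f (q i)) < (\<Sum>i<N. w i * f (p i))"
    unfolding eq using le lt k by (intro sum_strict_mono_ex1) auto
qed



lemma exposed_imp_extreme:
  fixes S :: "'a::euclidean_space set"
  assumes fin: "finite S" and v: "v \<in> S" and c: "\<And>u. u \<in> S \<Longrightarrow> u \<noteq> v \<Longrightarrow> c \<bullet> u < c \<bullet> v"
  shows "v extreme_point_of convex hull S"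
proof -
  have sub: "convex hull S \<subseteq> {x. c \<bullet> x \<le> c \<bullet> v}"
  proof (intro hull_minimal subsetI)
    fix x assume "x \<in> S" then show "x \<in> {x. c \<bullet> x \<le> c \<bullet> v}" using c[of x] by (cases "x = v") auto
  qed (simp add: convex_halfspace_le)
  define T where "T = convex hull S \<inter> {x. c \<bullet> x = c \<bullet> v}"
  have T: "T face_of convex hull S"
    unfolding T_def using sub by (intro face_of_Int_supporting_hyperplane_le) (auto simp: convex_convex_hull)
  obtain S' where S': "S' \<subseteq> S" "T = convex hull S'"
    by (rule face_of_convex_hull_subset[OF finite_imp_compact[OF fin] T])
  have "S' \<subseteq> T" using S'(2) hull_subset[of S' convex] by simp
  have "S' \<subseteq> {v}"
  proof
    fix x assume x: "x \<in> S'"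
    then have "x \<in> S" "c \<bullet> x = c \<bullet> v" using S' \<open>S' \<subseteq> T\<close> unfolding T_def by auto
    then show "x \<in> {v}" using c[of x] by (cases "x = v") auto
  qed
  then have "T \<subseteq> {v}" using hull_mono[OF \<open>S' \<subseteq> {v}\<close>, of convex] convex_hull_singleton S'(2) by auto
  moreover have "v \<in> T" unfolding T_def using v hull_subset[of S convex] by auto
  ultimately have "T = {v}" by blast
  then show ?thesis using T by (simp add: face_of_singleton)
qed

lemma extreme_imp_exposed:
  fixes S :: "'a::euclidean_space set"
  assumes fin: "finite S" and v: "v extreme_point_of convex hull S"
  shows "v \<in> S" and "\<exists>c. \<forall>u\<in>S. u \<noteq> v \<longrightarrow> c \<bullet> u < c \<bullet> v"
proof -
  show vS: "v \<in> S" using extreme_point_of_convex_hull[OF v] .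
  have "{v} face_of convex hull S" using v by (simp add: face_of_singleton)
  then have "{v} exposed_face_of convex hull S"
    using exposed_face_of_polyhedron[OF polytope_imp_polyhedron[OF polytope_convex_hull[OF fin]]] by simp
  then obtain a b where ab: "convex hull S \<subseteq> {x. a \<bullet> x \<le> b}" "{v} = convex hull S \<inter> {x. a \<bullet> x = b}"
    unfolding exposed_face_of_def by auto
  have "a \<bullet> u < a \<bullet> v" if "u \<in> S" "u \<noteq> v" for u
  proof -
    have uc: "u \<in> convex hull S" using that hull_subset[of S convex] by auto
    have "a \<bullet> v = b" using ab by blast
    moreover have "a \<bullet> u \<le> b" using ab uc by blast
    moreover have "a \<bullet> u \<noteq> b" using ab uc that by blast
    ultimately show ?thesis by simp
  qed
  then show "\<exists>c. \<forall>u\<in>S. u \<noteq> v \<longrightarrow> c \<bullet> u < c \<bullet> v" by blast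
qed



definition gsweep :: "'a::real_inner set \<Rightarrow> (nat \<Rightarrow> 'a) \<Rightarrow> bool" where
  "gsweep A p \<longleftrightarrow> bij_betw p {..<card A} A \<and> (\<exists>c. \<forall>i j. i < j \<longrightarrow> j < card A \<longrightarrow> c \<bullet> p j < c \<bullet> p i)"

definition gpt :: "'a::real_vector set \<Rightarrow> (nat \<Rightarrow> real) \<Rightarrow> (nat \<Rightarrow> 'a) \<Rightarrow> 'a" where
  "gpt A w p = (\<Sum>i<card A. w i *\<^sub>R p i)"

lemma sort_exists:
  fixes c :: "'a::real_inner"
  assumes fin: "finite A" and inj: "inj_on (\<lambda>u. c \<bullet> u) A"
  shows "\<exists>p. bij_betw p {..<card A} A \<and> (\<forall>i j. i < j \<longrightarrow> j < card A \<longrightarrow> c \<bullet> p j < c \<bullet> p i)"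
proof -
  define f where "f u = c \<bullet> u" for u
  define B where "B = f ` A"
  define xs where "xs = sorted_list_of_set B"
  define n where "n = card A"
  have injf: "inj_on f A" using inj unfolding f_def by simp
  have cB: "card B = n" unfolding B_def n_def using card_image[OF injf] .
  have finB: "finite B" unfolding B_def using fin by simp
  have lxs: "length xs = n" unfolding xs_def using cB finB by simp
  have sxs: "set xs = B" unfolding xs_def using finB by simp
  have str: "sorted_wrt (<) xs" unfolding xs_def using strict_sorted_list_of_set by blast
  define p where "p i = the_inv_into A f (xs ! (n - 1 - i))" for i
  have xsB: "xs ! (n - 1 - i) \<in> B" if "i < n" for i using that lxs sxs by (metis diff_less_Suc Suc_pred' bot_nat_0.extremum_strict less_imp_diff_less nth_mem not_less_zero zero_less_iff_neq_zero)
  have pA: "p i \<in> A" if "i < n" for i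
    unfolding p_def using xsB[OF that] the_inv_into_into[OF injf] unfolding B_def by blast
  have fp: "f (p i) = xs ! (n - 1 - i)" if "i < n" for i
    unfolding p_def using xsB[OF that] f_the_inv_into_f[OF injf] unfolding B_def by blast
  have dec: "f (p j) < f (p i)" if "i < j" "j < n" for i j
  proof -
    have "xs ! (n - 1 - j) < xs ! (n - 1 - i)"
      using that lxs by (intro sorted_wrt_nth_less[OF str]) auto
    then show ?thesis using fp that by simp
  qed
  have injp: "inj_on p {..<n}"
  proof (rule inj_onI)
    fix i j assume "i \<in> {..<n}" "j \<in> {..<n}" "p i = p j"
    then show "i = j" using dec[of i j] dec[of j i] by (cases i j rule: linorder_cases) auto
  qed
  have "p ` {..<n} \<subseteq> A" using pA by auto
  moreover have "card (p ` {..<n}) = card A" using card_image[OF injp] n_def by simp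
  ultimately have "p ` {..<n} = A" using fin by (simp add: card_subset_eq)
  then have "bij_betw p {..<n} A" using injp by (simp add: bij_betw_def)
  then show ?thesis using dec unfolding n_def f_def by blast
qed

lemma sweep_max:
  fixes c :: "'a::real_inner"
  assumes fin: "finite A" and w: "admissible_weights (card A) w"
    and p: "bij_betw p {..<card A} A" and dec: "\<And>i j. i < j \<Longrightarrow> j < card A \<Longrightarrow> c \<bullet> p j < c \<bullet> p i"
    and q: "bij_betw q {..<card A} A"
  shows "c \<bullet> gpt A w q \<le> c \<bullet> gpt A w p"
    and "\<exists>i<card A. q i \<noteq> p i \<Longrightarrow> c \<bullet> gpt A w q < c \<bullet> gpt A w p"
proof -
  have wd: "\<And>i j. i < j \<Longrightarrow> j < card A \<Longrightarrow> w j < w i" and wp: "\<And>i. i < card A \<Longrightarrow> 0 < w i"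
    using w unfolding admissible_weights_def by auto
  have e: "c \<bullet> gpt A w r = (\<Sum>i<card A. w i * (c \<bullet> r i))" for r
    unfolding gpt_def by (simp add: inner_sum_right)
  show "c \<bullet> gpt A w q \<le> c \<bullet> gpt A w p"
    unfolding e using rearrangement(1)[where f="\<lambda>u. c \<bullet> u", OF fin p q dec wd wp] by simp
  assume "\<exists>i<card A. q i \<noteq> p i"
  then show "c \<bullet> gpt A w q < c \<bullet> gpt A w p"
    unfolding e using rearrangement(2)[where f="\<lambda>u. c \<bullet> u", OF fin p q dec wd wp] by simp
qed

lemma gpt_cong: "(\<And>i. i < card A \<Longrightarrow> p i = q i) \<Longrightarrow> gpt A w p = gpt A w q"
  unfolding gpt_def by (intro sum.cong) auto

lemma sweep_unique:
  assumes fin: "finite A" and w: "admissible_weights (card A) w"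
    and p: "gsweep A p" and q: "bij_betw q {..<card A} A" and eq: "gpt A w q = gpt A w p"
  shows "\<forall>i<card A. q i = p i"
proof (rule ccontr)
  assume "\<not> (\<forall>i<card A. q i = p i)"
  then have ex: "\<exists>i<card A. q i \<noteq> p i" by auto
  obtain c where c: "\<And>i j. i < j \<Longrightarrow> j < card A \<Longrightarrow> c \<bullet> p j < c \<bullet> p i" and pb: "bij_betw p {..<card A} A"
    using p unfolding gsweep_def by blast
  show False using sweep_max(2)[OF fin w pb c q ex] eq by simp
qed

lemma sweep_points_finite:
  assumes fin: "finite A"
  shows "finite {gpt A w p | p. bij_betw p {..<card A} A}"
proof -
  have "{gpt A w p | p. bij_betw p {..<card A} A} \<subseteq> gpt A w ` ({..<card A} \<rightarrow>\<^sub>E A)"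
  proof
    fix x assume "x \<in> {gpt A w p | p. bij_betw p {..<card A} A}"
    then obtain p where p: "bij_betw p {..<card A} A" "x = gpt A w p" by blast
    have "restrict p {..<card A} \<in> {..<card A} \<rightarrow>\<^sub>E A" using p by (auto simp: bij_betw_def)
    moreover have "gpt A w (restrict p {..<card A}) = x" using p by (auto intro: gpt_cong)
    ultimately show "x \<in> gpt A w ` ({..<card A} \<rightarrow>\<^sub>E A)" by (metis image_eqI)
  qed
  moreover have "finite ({..<card A} \<rightarrow>\<^sub>E A)" using fin by (intro finite_PiE) auto
  ultimately show ?thesis by (meson finite_imageI finite_subset)
qed

lemma sweep_polytope_gpt: "sweep_polytope A w = convex hull {gpt A w p | p. bij_betw p {..<card A} A}"
  unfolding sweep_polytope_def gpt_def by simp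

lemma sweep_extreme:
  fixes A :: "'a::euclidean_space set"
  assumes fin: "finite A" and w: "admissible_weights (card A) w" and p: "gsweep A p"
  shows "gpt A w p extreme_point_of sweep_polytope A w"
proof -
  obtain c where c: "\<And>i j. i < j \<Longrightarrow> j < card A \<Longrightarrow> c \<bullet> p j < c \<bullet> p i" and pb: "bij_betw p {..<card A} A"
    using p unfolding gsweep_def by blast
  show ?thesis unfolding sweep_polytope_gpt
  proof (rule exposed_imp_extreme[where c=c])
    show "finite {gpt A w p | p. bij_betw p {..<card A} A}" using sweep_points_finite[OF fin] .
    show "gpt A w p \<in> {gpt A w p | p. bij_betw p {..<card A} A}" using pb by blast
    fix u assume "u \<in> {gpt A w p | p. bij_betw p {..<card A} A}" "u \<noteq> gpt A w p"
    then obtain q where q: "bij_betw q {..<card A} A" "u = gpt A w q" "u \<noteq> gpt A w p" by blast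
    then have "\<exists>i<card A. q i \<noteq> p i" using gpt_cong[of A q p w] by auto
    then show "c \<bullet> u < c \<bullet> gpt A w p" using sweep_max(2)[OF fin w pb c q(1)] q by simp
  qed
qed



lemma extreme_sweep:
  fixes A :: "'a::euclidean_space set"
  assumes fin: "finite A" and w: "admissible_weights (card A) w"
    and g: "inj_on (\<lambda>u. g \<bullet> u) A"
    and v: "v extreme_point_of sweep_polytope A w"
  shows "\<exists>p. gsweep A p \<and> v = gpt A w p"
proof -
  define S where "S = {gpt A w p | p. bij_betw p {..<card A} A}"
  have finS: "finite S" unfolding S_def using sweep_points_finite[OF fin] .
  have vS: "v \<in> S" and "\<exists>c. \<forall>u\<in>S. u \<noteq> v \<longrightarrow> c \<bullet> u < c \<bullet> v"
    using extreme_imp_exposed[OF finS] v unfolding S_def sweep_polytope_gpt by auto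
  then obtain c where c: "\<And>u. u \<in> S \<Longrightarrow> u \<noteq> v \<Longrightarrow> c \<bullet> u < c \<bullet> v" by blast
  obtain p0 where p0: "bij_betw p0 {..<card A} A" "v = gpt A w p0" using vS unfolding S_def by blast
  define K where "K = (\<Sum>u\<in>A \<union> S. \<bar>g \<bullet> u\<bar>)"
  have Kb: "\<bar>g \<bullet> u\<bar> \<le> K" if "u \<in> A \<union> S" for u
    unfolding K_def using that fin finS by (intro member_le_sum) auto
  have K0: "0 \<le> K" unfolding K_def by (intro sum_nonneg) auto
  define D where "D = {c \<bullet> v - c \<bullet> u | u. u \<in> S \<and> u \<noteq> v} \<union>
                      {c \<bullet> u - c \<bullet> u' | u u'. u \<in> A \<and> u' \<in> A \<and> c \<bullet> u' < c \<bullet> u} \<union> {1}"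
  have finD: "finite D"
  proof -
    have "{c \<bullet> v - c \<bullet> u | u. u \<in> S \<and> u \<noteq> v} \<subseteq> (\<lambda>u. c \<bullet> v - c \<bullet> u) ` S" by auto
    moreover have "{c \<bullet> u - c \<bullet> u' | u u'. u \<in> A \<and> u' \<in> A \<and> c \<bullet> u' < c \<bullet> u} \<subseteq> (\<lambda>(u,u'). c \<bullet> u - c \<bullet> u') ` (A \<times> A)" by auto
    ultimately show ?thesis unfolding D_def using fin finS by (meson finite_Un finite_SigmaI finite_imageI finite_insert finite.emptyI finite_subset)
  qed
  have Dpos: "0 < d" if "d \<in> D" for d using that c unfolding D_def by auto
  define \<delta> where "\<delta> = Min D"
  have \<delta>pos: "0 < \<delta>" unfolding \<delta>_def using finD Dpos by (subst Min_gr_iff) (auto simp: D_def)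
  have \<delta>le: "\<delta> \<le> d" if "d \<in> D" for d unfolding \<delta>_def using finD that by simp
  define \<epsilon> where "\<epsilon> = \<delta> / (2 * K + 1)"
  have \<epsilon>pos: "0 < \<epsilon>" unfolding \<epsilon>_def using \<delta>pos K0 by simp
  have \<epsilon>K: "\<epsilon> * (2 * K) < \<delta>"
  proof -
    have "\<epsilon> * (2 * K + 1) = \<delta>" unfolding \<epsilon>_def using K0 by simp
    then show ?thesis using \<epsilon>pos by (simp add: algebra_simps)
  qed
  have small: "\<epsilon> * (g \<bullet> a - g \<bullet> b) < \<delta>" if "a \<in> A \<union> S" "b \<in> A \<union> S" for a b
  proof -
    have "g \<bullet> a - g \<bullet> b \<le> 2 * K" using Kb[OF that(1)] Kb[OF that(2)] by linarith
    then have "\<epsilon> * (g \<bullet> a - g \<bullet> b) \<le> \<epsilon> * (2 * K)" using \<epsilon>pos by (intro mult_left_mono) auto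
    then show ?thesis using \<epsilon>K by linarith
  qed
  define c' where "c' = c + \<epsilon> *\<^sub>R g"
  have c'i: "c' \<bullet> u = c \<bullet> u + \<epsilon> * (g \<bullet> u)" for u unfolding c'_def by (simp add: inner_add_left)
  have gt: "c' \<bullet> u' < c' \<bullet> u" if "u \<in> A" "u' \<in> A" "c \<bullet> u' < c \<bullet> u" for u u'
  proof -
    have "c \<bullet> u - c \<bullet> u' \<in> D" unfolding D_def using that by blast
    then have "\<delta> \<le> c \<bullet> u - c \<bullet> u'" by (rule \<delta>le)
    moreover have "\<epsilon> * (g \<bullet> u' - g \<bullet> u) < \<delta>" using small that by auto
    ultimately show ?thesis unfolding c'i by (simp add: algebra_simps)
  qed
  have injc': "inj_on (\<lambda>u. c' \<bullet> u) A"
  proof (rule inj_onI)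
    fix u u' assume u: "u \<in> A" "u' \<in> A" "c' \<bullet> u = c' \<bullet> u'"
    consider "c \<bullet> u' < c \<bullet> u" | "c \<bullet> u < c \<bullet> u'" | "c \<bullet> u = c \<bullet> u'" by linarith
    then show "u = u'"
    proof cases
      case 1 then show ?thesis using gt[of u u'] u by simp
    next
      case 2 then show ?thesis using gt[of u' u] u by simp
    next
      case 3
      then have "g \<bullet> u = g \<bullet> u'" using u(3) \<epsilon>pos unfolding c'i by simp
      then show ?thesis using g u by (auto dest: inj_onD)
    qed
  qed
  obtain p where p: "bij_betw p {..<card A} A" and pd: "\<And>i j. i < j \<Longrightarrow> j < card A \<Longrightarrow> c' \<bullet> p j < c' \<bullet> p i"
    using sort_exists[OF fin injc'] by blast
  have sw: "gsweep A p" unfolding gsweep_def using p pd by blast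
  have "gpt A w p = v"
  proof (rule ccontr)
    assume ne: "gpt A w p \<noteq> v"
    have uS: "gpt A w p \<in> S" unfolding S_def using p by blast
    have "c \<bullet> v - c \<bullet> gpt A w p \<in> D" unfolding D_def using uS ne by blast
    then have d1: "\<delta> \<le> c \<bullet> v - c \<bullet> gpt A w p" by (rule \<delta>le)
    have "c' \<bullet> v \<le> c' \<bullet> gpt A w p" using sweep_max(1)[OF fin w p pd p0(1)] p0(2) by simp
    then have d2: "c \<bullet> v - c \<bullet> gpt A w p \<le> \<epsilon> * (g \<bullet> gpt A w p - g \<bullet> v)" unfolding c'i by (simp add: algebra_simps)
    have "\<epsilon> * (g \<bullet> gpt A w p - g \<bullet> v) < \<delta>" using small uS vS by auto
    then show False using d1 d2 by linarith
  qed
  then show ?thesis using sw by blast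
qed

lemma extreme_points_eq:
  fixes A :: "'a::euclidean_space set"
  assumes fin: "finite A" and w: "admissible_weights (card A) w"
    and g: "inj_on (\<lambda>u. g \<bullet> u) A"
  shows "{v. v extreme_point_of sweep_polytope A w} = gpt A w ` {p. gsweep A p}"
  using extreme_sweep[OF fin w g] sweep_extreme[OF fin w] by blast



abbreviation AA :: "((real^2) \<times> (real^'m::finite)) set" where "AA \<equiv> prod_simplex_vertices"

lemma AA_eq: "AA = (\<lambda>(i,j). (axis i 1, axis j 1)) ` UNIV"
  unfolding prod_simplex_vertices_def by auto

lemma mem_AA: "u \<in> AA \<longleftrightarrow> (\<exists>i j. u = (axis i 1, axis j 1))"
  unfolding prod_simplex_vertices_def by auto

lemma axis1_eq: "axis i (1::real) = axis j 1 \<longleftrightarrow> i = j"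
  by (simp add: axis_eq_axis)

lemma card_AA: "card (AA :: ((real^2) \<times> (real^'m::finite)) set) = 2 * CARD('m)"
proof -
  have inj: "inj (\<lambda>(i::2,j::'m). (axis i (1::real), axis j (1::real)))"
    by (auto simp: inj_def axis1_eq)
  have "card (AA :: ((real^2) \<times> (real^'m::finite)) set) = card (UNIV :: (2 \<times> 'm) set)"
    unfolding AA_eq using card_image[OF inj] by simp
  also have "\<dots> = 2 * CARD('m)" by (simp add: card_cartesian_product)
  finally show ?thesis .
qed

lemma finite_AA: "finite (AA :: ((real^2) \<times> (real^'m::finite)) set)"
  unfolding AA_eq by simp

lemma inner_axes: "c \<bullet> (axis a 1, axis b 1) = fst c $ a + snd c $ b"
  by (cases c) (simp add: inner_axis)

lemma generic_functional:
  "\<exists>g::(real^2) \<times> (real^'m::finite). inj_on (\<lambda>u. g \<bullet> u) AA"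
proof -
  obtain e :: "'m \<Rightarrow> nat" where e: "inj e" using finite_imp_inj_to_nat_seg[of "UNIV :: 'm set"] by auto
  define g :: "(real^2) \<times> (real^'m)" where "g = ((\<chi> i. if i = 1 then 0 else 1/2), (\<chi> j. real (e j)))"
  have gv: "g \<bullet> (axis a 1, axis b 1) = (if a = 1 then 0 else 1/2) + real (e b)" for a b
    unfolding inner_axes g_def by simp
  have "inj_on (\<lambda>u. g \<bullet> u) AA"
  proof (rule inj_onI)
    fix u v assume u: "u \<in> AA" "v \<in> AA" "g \<bullet> u = g \<bullet> v"
    then obtain a b a' b' where uv: "u = (axis a 1, axis b 1)" "v = (axis a' 1, axis b' 1)" unfolding mem_AA by blast
    have eq: "(if a = 1 then 0 else 1/2) + real (e b) = (if a' = 1 then 0 else (1/2::real)) + real (e b')"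
      using u(3) gv uv by simp
    have "a = a'"
    proof (rule ccontr)
      assume "a \<noteq> a'"
      then have "2 * real (e b) + 1 = 2 * real (e b') \<or> 2 * real (e b) = 2 * real (e b') + 1"
        using eq exhaust_2[of a] exhaust_2[of a'] by (auto split: if_splits)
      then have "2 * e b + 1 = 2 * e b' \<or> 2 * e b = 2 * e b' + 1" by linarith
      then show False by presburger
    qed
    then have "e b = e b'" using eq by simp
    then have "b = b'" using e by (simp add: inj_def)
    then show "u = v" using uv \<open>a = a'\<close> by simp
  qed
  then show ?thesis by blast
qed



lemma perm_act_axes:
  fixes s :: "2 \<Rightarrow> 2" and t :: "'m::finite \<Rightarrow> 'm"
  assumes s: "s permutes UNIV" and t: "t permutes UNIV"
  shows "perm_act (s, t) (axis a 1, axis b 1) = (axis (inv s a) 1, axis (inv t b) 1)"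
proof -
  have e1: "s i = a \<longleftrightarrow> i = inv s a" for i using permutes_inverses[OF s] by metis
  have e2: "t j = b \<longleftrightarrow> j = inv t b" for j using permutes_inverses[OF t] by metis
  have "(\<chi> i. axis a 1 $ s i) = (axis (inv s a) 1 :: real^2)"
    unfolding vec_eq_iff axis_def using e1 by simp
  moreover have "(\<chi> i. axis b 1 $ t i) = (axis (inv t b) 1 :: real^'m)"
    unfolding vec_eq_iff axis_def using e2 by simp
  ultimately show ?thesis unfolding perm_act_def by simp
qed

lemma perm_act_inner:
  fixes s :: "2 \<Rightarrow> 2" and t :: "'m::finite \<Rightarrow> 'm"
  assumes s: "s permutes UNIV" and t: "t permutes UNIV"
  shows "perm_act (s, t) c \<bullet> perm_act (s, t) (axis a 1, axis b 1) = c \<bullet> (axis a 1, axis b 1)"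
  unfolding perm_act_axes[OF s t] inner_axes
  by (simp add: perm_act_def permutes_inverses[OF s] permutes_inverses[OF t])

lemma perm_act_sum: "perm_act g (\<Sum>i\<in>I. r i *\<^sub>R p i) = (\<Sum>i\<in>I. r i *\<^sub>R perm_act g (p i))"
  unfolding perm_act_def by (simp add: vec_eq_iff fst_sum snd_sum prod_eq_iff)

lemma perm_act_comp: "perm_act (s2, t2) (perm_act (s1, t1) x) = perm_act (s1 \<circ> s2, t1 \<circ> t2) x"
  unfolding perm_act_def by (simp add: vec_eq_iff)

lemma perm_act_id: "perm_act (id, id) x = x"
  unfolding perm_act_def by (simp add: vec_eq_iff prod_eq_iff)



lemma perm_act_AA:
  fixes g :: "(2 \<Rightarrow> 2) \<times> ('m::finite \<Rightarrow> 'm)"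
  assumes g: "g \<in> perm_group"
  shows "bij_betw (perm_act g) AA AA"
proof -
  obtain s t where st: "g = (s, t)" "s permutes UNIV" "t permutes UNIV" using g unfolding perm_group_def by auto
  have pa: "perm_act g (axis a 1, axis b 1) = (axis (inv s a) 1, axis (inv t b) 1)" for a b
    using perm_act_axes[OF st(2) st(3)] st(1) by simp
  have sub: "perm_act g ` AA \<subseteq> AA"
  proof
    fix x assume "x \<in> perm_act g ` AA"
    then obtain y where y: "y \<in> AA" "x = perm_act g y" by blast
    then obtain a b where "x = perm_act g (axis a 1, axis b 1)" unfolding mem_AA by blast
    then show "x \<in> AA" unfolding mem_AA pa by blast
  qed
  have inj: "inj_on (perm_act g) AA"
  proof (rule inj_onI)
    fix u v assume uv0: "u \<in> AA" "v \<in> AA" "perm_act g u = perm_act g v"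
    obtain a b where u: "u = (axis a 1, axis b 1)" using uv0(1) unfolding mem_AA by blast
    obtain a' b' where v: "v = (axis a' 1, axis b' 1)" using uv0(2) unfolding mem_AA by blast
    have "inv s a = inv s a'" "inv t b = inv t b'" using uv0(3) unfolding u v pa by (simp_all add: axis1_eq)
    then have "s (inv s a) = s (inv s a')" "t (inv t b) = t (inv t b')" by simp_all
    then have "a = a'" "b = b'" unfolding permutes_inverses(1)[OF st(2)] permutes_inverses(1)[OF st(3)] .
    then show "u = v" using u v by simp
  qed
  have "perm_act g ` AA = AA" using card_subset_eq[OF finite_AA sub card_image[OF inj]] .
  then show ?thesis using inj by (simp add: bij_betw_def)
qed



definition rowof :: "(real^2) \<times> (real^'m::finite) \<Rightarrow> 2" where
  "rowof u = (SOME a. fst u $ a = 1)"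
definition colof :: "(real^2) \<times> (real^'m::finite) \<Rightarrow> 'm" where
  "colof u = (SOME b. snd u $ b = 1)"

lemma axis_one_iff: "(axis a (1::real) $ a' = 1) \<longleftrightarrow> a' = a"
  by (simp add: axis_def)

lemma rowof_axes [simp]: "rowof (axis a 1, axis b 1 :: real^'m::finite) = a"
  unfolding rowof_def by (simp add: axis_one_iff)
lemma colof_axes [simp]: "colof (axis a 1 :: real^2, axis b 1 :: real^'m::finite) = b"
  unfolding colof_def by (simp add: axis_one_iff)

lemma AA_rc: "u \<in> AA \<Longrightarrow> u = (axis (rowof u) 1, axis (colof u) 1)"
  unfolding mem_AA by auto

lemma AA_eqI: "u \<in> AA \<Longrightarrow> v \<in> AA \<Longrightarrow> rowof u = rowof v \<Longrightarrow> colof u = colof v \<Longrightarrow> u = v"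
  by (metis AA_rc)

lemma axes_AA: "(axis a 1, axis b 1) \<in> AA"
  unfolding mem_AA by blast

lemma two_cases: "(a::2) \<noteq> r \<Longrightarrow> b \<noteq> r \<Longrightarrow> a = b"
  using exhaust_2[of a] exhaust_2[of b] exhaust_2[of r] by auto

definition rk :: "real^'m::finite \<Rightarrow> 'm \<Rightarrow> nat" where
  "rk y b = card {b'. y $ b < y $ b'}"

definition word :: "(nat \<Rightarrow> (real^2) \<times> (real^'m::finite)) \<Rightarrow> bool list" where
  "word p = map (\<lambda>i. rowof (p i) = rowof (p 0)) [0..<card (AA :: ((real^2) \<times> (real^'m)) set)]"

lemma rk_props:
  fixes y :: "real^'m::finite"
  assumes inj: "\<And>b b'. y $ b = y $ b' \<Longrightarrow> b = b'"
  shows "inj (rk y)" and "range (rk y) = {..<CARD('m)}"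
proof -
  have lt: "rk y b' < rk y b" if "y $ b < y $ b'" for b b'
  proof -
    have "insert b' {c. y $ b' < y $ c} \<subseteq> {c. y $ b < y $ c}" using that by auto
    moreover have "b' \<notin> {c. y $ b' < y $ c}" by simp
    ultimately have "card (insert b' {c. y $ b' < y $ c}) \<le> card {c. y $ b < y $ c}"
      by (intro card_mono) auto
    then show ?thesis unfolding rk_def using \<open>b' \<notin> _\<close> by simp
  qed
  show injr: "inj (rk y)"
  proof (rule injI)
    fix b b' assume e: "rk y b = rk y b'"
    show "b = b'"
    proof (rule ccontr)
      assume "b \<noteq> b'"
      then have "y $ b \<noteq> y $ b'" using inj by blast
      then show False using lt[of b b'] lt[of b' b] e by linarith
    qed
  qed
  have "rk y b < CARD('m)" for b
  proof -
    have "{b'. y $ b < y $ b'} \<subseteq> UNIV - {b}" by auto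
    then have "card {b'. y $ b < y $ b'} \<le> card (UNIV - {b} :: 'm set)" by (intro card_mono) auto
    also have "\<dots> < CARD('m)" by (simp add: card_Diff_singleton_if)
    finally show ?thesis unfolding rk_def .
  qed
  then have "range (rk y) \<subseteq> {..<CARD('m)}" by auto
  moreover have "card (range (rk y)) = CARD('m)" using card_image[OF injr] by simp
  ultimately show "range (rk y) = {..<CARD('m)}" by (simp add: card_subset_eq)
qed

locale swp =
  fixes p :: "nat \<Rightarrow> (real^2) \<times> (real^'m::finite)" and c :: "(real^2) \<times> (real^'m)" and N :: nat
  assumes N_def: "N = card (AA :: ((real^2) \<times> (real^'m)) set)"
    and bij: "bij_betw p {..<N} AA"
    and dec: "\<And>i j. i < j \<Longrightarrow> j < N \<Longrightarrow> c \<bullet> p j < c \<bullet> p i"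
begin

lemma pA: "i < N \<Longrightarrow> p i \<in> AA"
  using bij by (auto simp: bij_betw_def)

lemma injp: "i < N \<Longrightarrow> j < N \<Longrightarrow> p i = p j \<Longrightarrow> i = j"
  using bij by (auto simp: bij_betw_def dest: inj_onD)

lemma val: "c \<bullet> p i = fst c $ rowof (p i) + snd c $ colof (p i)" if "i < N"
  using AA_rc[OF pA[OF that]] inner_axes by metis

definition idx where "idx u = inv_into {..<N} p u"

lemma idx: "u \<in> AA \<Longrightarrow> idx u < N \<and> p (idx u) = u"
  unfolding idx_def using bij by (metis bij_betw_def f_inv_into_f inv_into_into lessThan_iff)

lemma dec_iff: "i < N \<Longrightarrow> j < N \<Longrightarrow> c \<bullet> p j < c \<bullet> p i \<longleftrightarrow> i < j"
  using dec by (metis less_asym not_less_iff_gr_or_eq)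

lemma y_inj: "snd c $ b = snd c $ b' \<Longrightarrow> b = b'"
proof -
  assume e: "snd c $ b = snd c $ b'"
  define u where "u = (axis (1::2) 1 :: real^2, axis b 1 :: real^'m)"
  define u' where "u' = (axis (1::2) 1 :: real^2, axis b' 1 :: real^'m)"
  obtain i where i: "i < N" "p i = u" using idx[of u] axes_AA unfolding u_def by blast
  obtain j where j: "j < N" "p j = u'" using idx[of u'] axes_AA unfolding u'_def by blast
  have "c \<bullet> p i = c \<bullet> p j" using i j e by (simp add: u_def u'_def inner_axes)
  then have "i = j" using dec_iff[OF i(1) j(1)] dec_iff[OF j(1) i(1)] by (metis linorder_neqE_nat order_less_irrefl)
  then have "u = u'" using i j by simp
  then show "b = b'" unfolding u_def u'_def by (simp add: axis1_eq)
qed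

lemma N_pos: "0 < N"
  using card_AA[where 'm='m] N_def by simp

lemma top_row: "a \<noteq> rowof (p 0) \<Longrightarrow> fst c $ a < fst c $ rowof (p 0)"
proof -
  assume a: "a \<noteq> rowof (p 0)"
  define u where "u = (axis a 1 :: real^2, axis (colof (p 0)) 1 :: real^'m)"
  obtain j where j: "j < N" "p j = u" using idx[of u] axes_AA unfolding u_def by blast
  have "j \<noteq> 0"
  proof
    assume "j = 0"
    have "rowof (p j) = a" using j(2) unfolding u_def by simp
    then have "rowof (p 0) = a" using \<open>j = 0\<close> by simp
    then show False using a by simp
  qed
  then have "c \<bullet> p j < c \<bullet> p 0" using dec[of 0 j] j by simp
  then show ?thesis using j val[OF N_pos] unfolding u_def by (simp add: inner_axes)
qed

lemma cnt_rk: "i < N \<Longrightarrow> card {j. j < i \<and> rowof (p j) = rowof (p i)} = rk (snd c) (colof (p i))"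
proof -
  assume i: "i < N"
  define a where "a = rowof (p i)"
  define b where "b = colof (p i)"
  have "bij_betw (\<lambda>j. colof (p j)) {j. j < i \<and> rowof (p j) = a} {b'. snd c $ b < snd c $ b'}"
    unfolding bij_betw_def
  proof (intro conjI)
    show "inj_on (\<lambda>j. colof (p j)) {j. j < i \<and> rowof (p j) = a}"
    proof (rule inj_onI)
      fix j j' assume "j \<in> {j. j < i \<and> rowof (p j) = a}" "j' \<in> {j. j < i \<and> rowof (p j) = a}" "colof (p j) = colof (p j')"
      then show "j = j'" using i pA AA_eqI injp by (metis (mono_tags, lifting) mem_Collect_eq order.strict_trans)
    qed
    show "(\<lambda>j. colof (p j)) ` {j. j < i \<and> rowof (p j) = a} = {b'. snd c $ b < snd c $ b'}"
    proof (intro equalityI subsetI)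
      fix x assume "x \<in> (\<lambda>j. colof (p j)) ` {j. j < i \<and> rowof (p j) = a}"
      then obtain j where j: "j < i" "rowof (p j) = a" "x = colof (p j)" by blast
      have "c \<bullet> p i < c \<bullet> p j" using dec j i by simp
      then show "x \<in> {b'. snd c $ b < snd c $ b'}" using val[OF i] val[of j] j i unfolding a_def b_def by simp
    next
      fix x assume x: "x \<in> {b'. snd c $ b < snd c $ b'}"
      define u where "u = (axis a 1 :: real^2, axis x 1 :: real^'m)"
      obtain j where j: "j < N" "p j = u" using idx[of u] axes_AA unfolding u_def by blast
      have vj: "c \<bullet> p j = fst c $ a + snd c $ x" using j unfolding u_def by (simp add: inner_axes)
      have vi: "c \<bullet> p i = fst c $ a + snd c $ b" using val[OF i] unfolding a_def b_def by simp
      have "c \<bullet> p i < c \<bullet> p j" using vi vj x by simp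
      then have "j < i" using dec_iff[OF j(1) i] by simp
      moreover have "rowof (p j) = a" "colof (p j) = x" using j unfolding u_def by simp_all
      ultimately show "x \<in> (\<lambda>j. colof (p j)) ` {j. j < i \<and> rowof (p j) = a}" by force
    qed
  qed
  then show ?thesis unfolding rk_def a_def b_def by (rule bij_betw_same_card)
qed

end



definition cntT :: "bool list \<Rightarrow> nat" where "cntT bs = length (filter id bs)"
definition cntF :: "bool list \<Rightarrow> nat" where "cntF bs = length (filter Not bs)"

definition ballot :: "nat \<Rightarrow> bool list set" where
  "ballot m = {bs. length bs = 2 * m \<and> cntT bs = m \<and> (\<forall>l\<le>length bs. cntF (take l bs) \<le> cntT (take l bs))}"

context swp
begin

lemma word_len: "length (word p) = N"
  unfolding word_def N_def by simp

lemma word_nth: "i < N \<Longrightarrow> word p ! i = (rowof (p i) = rowof (p 0))"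
  unfolding word_def N_def by simp

lemma cnt_take:
  assumes l: "l \<le> N"
  shows "cntT (take l (word p)) = card {i. i < l \<and> rowof (p i) = rowof (p 0)}"
    and "cntF (take l (word p)) = card {i. i < l \<and> rowof (p i) \<noteq> rowof (p 0)}"
proof -
  have len: "length (take l (word p)) = l" using l word_len by simp
  have nth: "take l (word p) ! i = (rowof (p i) = rowof (p 0))" if "i < l" for i
    using that l word_nth by simp
  show "cntT (take l (word p)) = card {i. i < l \<and> rowof (p i) = rowof (p 0)}"
    unfolding cntT_def length_filter_conv_card len using nth by (intro arg_cong[where f=card]) auto
  show "cntF (take l (word p)) = card {i. i < l \<and> rowof (p i) \<noteq> rowof (p 0)}"
    unfolding cntF_def length_filter_conv_card len using nth by (intro arg_cong[where f=card]) auto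
qed

lemma row_count: "card {i. i < N \<and> rowof (p i) = a} = CARD('m)"
proof -
  have "bij_betw (\<lambda>i. colof (p i)) {i. i < N \<and> rowof (p i) = a} (UNIV :: 'm set)"
    unfolding bij_betw_def
  proof (intro conjI)
    show "inj_on (\<lambda>i. colof (p i)) {i. i < N \<and> rowof (p i) = a}"
      by (rule inj_onI) (metis (mono_tags, lifting) AA_eqI injp mem_Collect_eq pA)
    show "(\<lambda>i. colof (p i)) ` {i. i < N \<and> rowof (p i) = a} = UNIV"
    proof (intro equalityI subsetI)
      fix b :: 'm
      define u where "u = (axis a 1 :: real^2, axis b 1 :: real^'m)"
      obtain j where j: "j < N" "p j = u" using idx[of u] axes_AA unfolding u_def by blast
      then show "b \<in> (\<lambda>i. colof (p i)) ` {i. i < N \<and> rowof (p i) = a}" unfolding u_def by force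
    qed simp
  qed
  then show ?thesis by (simp add: bij_betw_same_card)
qed

lemma word_ballot: "word p \<in> ballot CARD('m)"
proof -
  have NN: "N = 2 * CARD('m)" using N_def card_AA by simp
  have T: "cntT (word p) = CARD('m)"
    using cnt_take(1)[of N] word_len row_count[of "rowof (p 0)"] by simp
  have P: "cntF (take l (word p)) \<le> cntT (take l (word p))" if l: "l \<le> length (word p)" for l
  proof -
    define r where "r = rowof (p 0)"
    have lN: "l \<le> N" using l word_len by simp
    define h where "h j = idx (axis r 1 :: real^2, axis (colof (p j)) 1 :: real^'m)" for j
    have hp: "h j < N" "p (h j) = (axis r 1, axis (colof (p j)) 1)" for j
      using idx axes_AA unfolding h_def by blast+
    have hlt: "h j < j" if "j < N" "rowof (p j) \<noteq> r" for j
    proof -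
      have "c \<bullet> p j = fst c $ rowof (p j) + snd c $ colof (p j)" using val that by simp
      also have "\<dots> < fst c $ r + snd c $ colof (p j)" using top_row[of "rowof (p j)"] that unfolding r_def by simp
      also have "\<dots> = c \<bullet> p (h j)" using hp by (simp add: inner_axes)
      finally show ?thesis using dec_iff[OF hp(1) that(1)] by simp
    qed
    have "card {i. i < l \<and> rowof (p i) \<noteq> r} \<le> card {i. i < l \<and> rowof (p i) = r}"
    proof (rule card_inj_on_le[where f=h])
      show "inj_on h {i. i < l \<and> rowof (p i) \<noteq> r}"
      proof (rule inj_onI)
        fix j j' assume jj: "j \<in> {i. i < l \<and> rowof (p i) \<noteq> r}" "j' \<in> {i. i < l \<and> rowof (p i) \<noteq> r}" "h j = h j'"
        then have "colof (p j) = colof (p j')" using hp[of j] hp[of j'] by (metis colof_axes)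
        moreover have "rowof (p j) = rowof (p j')" using jj two_cases by auto
        moreover have "j < N" "j' < N" using jj lN by auto
        ultimately have "p j = p j'" using AA_eqI[OF pA pA] by blast
        then show "j = j'" using injp jj lN by auto
      qed
      show "h ` {i. i < l \<and> rowof (p i) \<noteq> r} \<subseteq> {i. i < l \<and> rowof (p i) = r}"
      proof
        fix x assume "x \<in> h ` {i. i < l \<and> rowof (p i) \<noteq> r}"
        then obtain j where j: "j < l" "rowof (p j) \<noteq> r" "x = h j" by blast
        have "h j < j" using hlt j lN by simp
        moreover have "rowof (p (h j)) = r" using hp by simp
        ultimately show "x \<in> {i. i < l \<and> rowof (p i) = r}" using j by simp
      qed
    qed simp
    then show ?thesis using cnt_take[OF lN] unfolding r_def by simp
  qed
  show ?thesis unfolding ballot_def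
  proof (intro CollectI conjI allI impI)
    show "length (word p) = 2 * CARD('m)" using word_len NN by simp
    show "cntT (word p) = CARD('m)" by (rule T)
    fix l assume "l \<le> length (word p)" then show "cntF (take l (word p)) \<le> cntT (take l (word p))" by (rule P)
  qed
qed

end



lemma two_eq_iff: "(a::2) = b \<longleftrightarrow> ((a = r) \<longleftrightarrow> (b = r))"
proof (cases "a = b")
  case False
  then show ?thesis using two_cases[of a r b] by auto
qed simp

lemma row_perm_exists:
  fixes r r' :: 2 and f f' :: "nat \<Rightarrow> 2"
  assumes "\<And>i. i \<in> I \<Longrightarrow> (f i = r) = (f' i = r')"
  shows "\<exists>\<sigma>. \<sigma> permutes UNIV \<and> (\<forall>i\<in>I. \<sigma> (f i) = f' i) \<and> \<sigma> r = r'"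
proof -
  define \<sigma> where "\<sigma> = Transposition.transpose r r'"
  have "\<sigma> permutes UNIV" unfolding \<sigma>_def by (rule permutes_swap_id) auto
  moreover have "\<sigma> (f i) = f' i" if "i \<in> I" for i
  proof (cases "f i = r")
    case True then show ?thesis using assms[OF that] unfolding \<sigma>_def by simp
  next
    case False
    then have f': "f' i \<noteq> r'" using assms[OF that] by simp
    show ?thesis
    proof (cases "r = r'")
      case True
      then have "f i = f' i" using two_cases[of "f i" r "f' i"] False f' by simp
      then show ?thesis using True unfolding \<sigma>_def by simp
    next
      case rr: False
      have "f i = r'" using two_cases[of "f i" r r'] False rr by auto
      moreover have "f' i = r" using two_cases[of "f' i" r' r] f' rr by auto
      ultimately show ?thesis unfolding \<sigma>_def by simp
    qed
  qed
  moreover have "\<sigma> r = r'" unfolding \<sigma>_def by simp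
  ultimately show ?thesis by blast
qed

lemma word_complete:
  fixes p p' :: "nat \<Rightarrow> (real^2) \<times> (real^'m::finite)"
  assumes s1: "swp p c N" and s2: "swp p' c' N" and w: "word p = word p'"
  shows "\<exists>g\<in>perm_group. \<forall>i<N. p' i = perm_act g (p i)"
proof -
  interpret A: swp p c N by (rule s1)
  interpret B: swp p' c' N by (rule s2)
  have rw: "(rowof (p i) = rowof (p 0)) = (rowof (p' i) = rowof (p' 0))" if "i < N" for i
    using A.word_nth[OF that] B.word_nth[OF that] w by simp
  obtain \<sigma> where \<sigma>: "\<sigma> permutes UNIV" "\<And>i. i < N \<Longrightarrow> \<sigma> (rowof (p i)) = rowof (p' i)"
    using row_perm_exists[where I="{..<N}" and f="\<lambda>i. rowof (p i)" and r="rowof (p 0)" and f'="\<lambda>i. rowof (p' i)" and r'="rowof (p' 0)"] rw by auto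
  have sameset: "{j. j < i \<and> rowof (p j) = rowof (p i)} = {j. j < i \<and> rowof (p' j) = rowof (p' i)}" if "i < N" for i
  proof -
    have "(rowof (p j) = rowof (p i)) = (rowof (p' j) = rowof (p' i))" if "j < i" for j
    proof -
      have "j < N" using that \<open>i < N\<close> by simp
      then show ?thesis using rw[of i] rw[of j] \<open>i < N\<close>
        two_eq_iff[of "rowof (p j)" "rowof (p i)" "rowof (p 0)"] two_eq_iff[of "rowof (p' j)" "rowof (p' i)" "rowof (p' 0)"]
        by simp
    qed
    then show ?thesis by auto
  qed
  have rkeq: "rk (snd c) (colof (p i)) = rk (snd c') (colof (p' i))" if "i < N" for i
    using A.cnt_rk[OF that] B.cnt_rk[OF that] sameset[OF that] by simp
  have r1: "inj (rk (snd c))" "range (rk (snd c)) = {..<CARD('m)}" using rk_props[of "snd c", OF A.y_inj] by auto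
  have r2: "inj (rk (snd c'))" "range (rk (snd c')) = {..<CARD('m)}" using rk_props[of "snd c'", OF B.y_inj] by auto
  define \<tau> where "\<tau> = the_inv_into UNIV (rk (snd c')) \<circ> rk (snd c)"
  have \<tau>i: "\<tau> (colof (p i)) = colof (p' i)" if "i < N" for i
    unfolding \<tau>_def using rkeq[OF that] the_inv_into_f_f[OF r2(1)] by simp
  have "inj \<tau>"
  proof (rule injI)
    fix a b assume "\<tau> a = \<tau> b"
    then have e: "the_inv_into UNIV (rk (snd c')) (rk (snd c) a) = the_inv_into UNIV (rk (snd c')) (rk (snd c) b)"
      unfolding \<tau>_def by simp
    have "rk (snd c) a \<in> range (rk (snd c'))" "rk (snd c) b \<in> range (rk (snd c'))" using r1(2) r2(2) by auto
    then have "rk (snd c) a = rk (snd c) b"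
      using arg_cong[OF e, of "rk (snd c')"] f_the_inv_into_f[OF r2(1)] by simp
    then show "a = b" using r1(1) by (simp add: inj_def)
  qed
  then have "bij \<tau>" using finite_UNIV_inj_surj[of \<tau>] by (simp add: bij_def)
  then have \<tau>p: "\<tau> permutes UNIV" by (intro bij_imp_permutes) auto
  define g where "g = (inv \<sigma>, inv \<tau>)"
  have g: "g \<in> perm_group" unfolding g_def perm_group_def using permutes_inv[OF \<sigma>(1)] permutes_inv[OF \<tau>p] by auto
  have "p' i = perm_act g (p i)" if "i < N" for i
  proof -
    have e: "p i = (axis (rowof (p i)) 1, axis (colof (p i)) 1)" by (rule AA_rc[OF A.pA[OF that]])
    have "perm_act g (p i) = perm_act g (axis (rowof (p i)) 1, axis (colof (p i)) 1)"
      using arg_cong[OF e, of "perm_act g"] .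
    also have "\<dots> = (axis (inv (inv \<sigma>) (rowof (p i))) 1, axis (inv (inv \<tau>) (colof (p i))) 1)"
      unfolding g_def by (rule perm_act_axes[OF permutes_inv[OF \<sigma>(1)] permutes_inv[OF \<tau>p]])
    also have "\<dots> = (axis (rowof (p' i)) 1, axis (colof (p' i)) 1)"
      using permutes_inv_inv[OF \<sigma>(1)] permutes_inv_inv[OF \<tau>p] \<sigma>(2)[OF that] \<tau>i[OF that] by simp
    also have "\<dots> = p' i" using AA_rc[OF B.pA[OF that]] by simp
    finally show ?thesis by simp
  qed
  then show ?thesis using g by auto
qed



lemma word_invariant:
  fixes p :: "nat \<Rightarrow> (real^2) \<times> (real^'m::finite)"
  assumes s: "swp p c N" and g: "g \<in> perm_group"
  shows "swp (perm_act g \<circ> p) (perm_act g c) N" and "word (perm_act g \<circ> p) = word p"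
proof -
  interpret A: swp p c N by (rule s)
  obtain s t where st: "g = (s, t)" "s permutes UNIV" "t permutes UNIV" using g unfolding perm_group_def by auto
  have ip: "perm_act g c \<bullet> perm_act g u = c \<bullet> u" if "u \<in> AA" for u
    using AA_rc[OF that] perm_act_inner[OF st(2) st(3), of c] st(1) by metis
  have row: "rowof (perm_act g u) = inv s (rowof u)" if "u \<in> AA" for u
    using AA_rc[OF that] perm_act_axes[OF st(2) st(3)] st(1) by (metis rowof_axes)
  show "swp (perm_act g \<circ> p) (perm_act g c) N"
  proof
    show "N = card (AA :: ((real^2) \<times> (real^'m)) set)" by (rule A.N_def)
    show "bij_betw (perm_act g \<circ> p) {..<N} AA" using bij_betw_trans[OF A.bij perm_act_AA[OF g]] .
    show "perm_act g c \<bullet> (perm_act g \<circ> p) j < perm_act g c \<bullet> (perm_act g \<circ> p) i" if "i < j" "j < N" for i j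
      using ip A.pA A.dec that by simp
  qed
  have "(rowof (perm_act g (p i)) = rowof (perm_act g (p 0))) = (rowof (p i) = rowof (p 0))" if "i < N" for i
    using row[OF A.pA[OF that]] row[OF A.pA[OF A.N_pos]] permutes_inj[OF permutes_inv[OF st(2)]]
    by (simp add: inj_eq)
  then show "word (perm_act g \<circ> p) = word p"
    unfolding word_def using A.N_def by (intro map_cong) auto
qed



definition kk :: "bool list \<Rightarrow> nat \<Rightarrow> nat" where
  "kk bs i = length (filter (\<lambda>b. b = bs ! i) (take i bs))"

definition vl :: "(nat \<Rightarrow> real) \<Rightarrow> bool list \<Rightarrow> nat \<Rightarrow> real" where
  "vl Y bs i = (if bs ! i then 1 else 0) + Y (kk bs i)"

lemma kk_app: "i < length bs \<Longrightarrow> kk (bs @ [x]) i = kk bs i"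
  unfolding kk_def by (simp add: nth_append)

lemma kk_last: "kk (bs @ [x]) (length bs) = (if x then cntT bs else cntF bs)"
  unfolding kk_def cntT_def cntF_def by (cases x) (simp_all add: id_def)

lemma cnt_app: "cntT (bs @ [x]) = cntT bs + (if x then 1 else 0)" "cntF (bs @ [x]) = cntF bs + (if x then 0 else 1)"
  unfolding cntT_def cntF_def by auto

lemma filter_take_le: "length (filter P (take n xs)) \<le> length (filter P xs)"
proof -
  have "length (filter P xs) = length (filter P (take n xs)) + length (filter P (drop n xs))"
    by (metis append_take_drop_id filter_append length_append)
  then show ?thesis by simp
qed

lemma kk_lt: "i < length bs \<Longrightarrow> kk bs i < (if bs ! i then cntT bs else cntF bs)"
proof -
  assume i: "i < length bs"
  have "take (Suc i) bs = take i bs @ [bs ! i]" using i by (simp add: take_Suc_conv_app_nth)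
  then have "Suc (kk bs i) = length (filter (\<lambda>b. b = bs ! i) (take (Suc i) bs))"
    unfolding kk_def by simp
  also have "\<dots> \<le> length (filter (\<lambda>b. b = bs ! i) bs)" by (rule filter_take_le)
  also have "\<dots> = (if bs ! i then cntT bs else cntF bs)"
    unfolding cntT_def cntF_def by (cases "bs ! i") (simp_all add: id_def)
  finally show ?thesis by simp
qed

lemma vl_app: "i < length bs \<Longrightarrow> vl Y (bs @ [x]) i = vl Y bs i"
  unfolding vl_def by (simp add: kk_app nth_append)

lemma dense_finite:
  fixes l :: real
  assumes "finite U" "\<And>u. u \<in> U \<Longrightarrow> l < u"
  shows "\<exists>y. l < y \<and> (\<forall>u\<in>U. y < u)"
proof -
  define m where "m = Min (insert (l + 1) U)"
  have "l < m" unfolding m_def using assms by simp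
  moreover have "m \<le> u" if "u \<in> U" for u unfolding m_def using assms that by simp
  ultimately show ?thesis by (intro exI[of _ "(l + m) / 2"]) fastforce
qed

definition inv_real :: "(nat \<Rightarrow> real) \<Rightarrow> bool list \<Rightarrow> bool" where
  "inv_real Y bs \<longleftrightarrow>
     (\<forall>k k'. k < k' \<longrightarrow> k' < cntT bs \<longrightarrow> Y k' < Y k) \<and>
     (\<forall>i j. i < j \<longrightarrow> j < length bs \<longrightarrow> vl Y bs j < vl Y bs i) \<and>
     (cntF bs < cntT bs \<longrightarrow> (\<forall>i<length bs. Y (cntF bs) < vl Y bs i)) \<and>
     (cntF bs < cntT bs \<longrightarrow> Y (cntF bs) < Y (cntT bs - 1) + 1)"

lemma realize_prefix:
  "(\<forall>l\<le>length bs. cntF (take l bs) \<le> cntT (take l bs)) \<Longrightarrow> \<exists>Y. inv_real Y bs"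
proof (induction bs rule: rev_induct)
  case Nil
  then show ?case unfolding inv_real_def cntT_def cntF_def by simp
next
  case (snoc x bs)
  have pre: "\<forall>l\<le>length bs. cntF (take l bs) \<le> cntT (take l bs)"
  proof (intro allI impI)
    fix l assume "l \<le> length bs"
    then show "cntF (take l bs) \<le> cntT (take l bs)" using snoc.prems[rule_format, of l] by simp
  qed
  have full: "cntF (bs @ [x]) \<le> cntT (bs @ [x])" using snoc.prems[rule_format, of "length (bs @ [x])"] by simp
  obtain Y where Y: "inv_real Y bs" using snoc.IH[OF pre] by blast
  have Y1: "\<And>k k'. k < k' \<Longrightarrow> k' < cntT bs \<Longrightarrow> Y k' < Y k"
   and Y2: "\<And>i j. i < j \<Longrightarrow> j < length bs \<Longrightarrow> vl Y bs j < vl Y bs i"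
   and Y3: "cntF bs < cntT bs \<Longrightarrow> i < length bs \<Longrightarrow> Y (cntF bs) < vl Y bs i"
   and Y4: "cntF bs < cntT bs \<Longrightarrow> Y (cntF bs) < Y (cntT bs - 1) + 1" for i
    using Y unfolding inv_real_def by blast+
  have Y1': "Y k' \<le> Y k" if "k \<le> k'" "k' < cntT bs" for k k'
    using Y1[of k k'] that by (cases "k = k'") auto
  define a where "a = cntT bs"
  define b where "b = cntF bs"
  have ba: "b \<le> a" using pre[rule_format, of "length bs"] unfolding a_def b_def by simp
  show ?case
  proof (cases x)
    case True
    define U where "U = (if 0 < a then {Y (a - 1)} else {}) \<union> (\<lambda>i. vl Y bs i - 1) ` {..<length bs}"
    define l0 where "l0 = (if b < a then Y b - 1 else Min (insert 0 U) - 1)"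
    have finU: "finite U" unfolding U_def by simp
    have lU: "l0 < u" if "u \<in> U" for u
    proof (cases "b < a")
      case True
      then have "0 < a" by simp
      have "Y b - 1 < Y (a - 1)" using Y4 True unfolding a_def b_def by simp
      moreover have "Y b - 1 < vl Y bs i - 1" if "i < length bs" for i using Y3[OF _ that] True unfolding a_def b_def by simp
      ultimately show ?thesis using that True unfolding U_def l0_def by (auto split: if_splits)
    next
      case False
      then have "Min (insert 0 U) \<le> u" using finU that by simp
      then show ?thesis unfolding l0_def using False by simp
    qed
    obtain y where y: "l0 < y" "\<And>u. u \<in> U \<Longrightarrow> y < u" using dense_finite[OF finU lU] by blast
    have ya: "0 < a \<Longrightarrow> y < Y (a - 1)" using y(2)[of "Y (a - 1)"] unfolding U_def by simp
    have yv: "i < length bs \<Longrightarrow> y + 1 < vl Y bs i" for i using y(2)[of "vl Y bs i - 1"] unfolding U_def by auto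
    have yb: "b < a \<Longrightarrow> Y b < y + 1" using y(1) unfolding l0_def by simp
    define Y' where "Y' = Y(a := y)"
    have vlY': "vl Y' bs i = vl Y bs i" if "i < length bs" for i
    proof -
      have "kk bs i \<noteq> a" using kk_lt[OF that] ba unfolding a_def b_def by (auto split: if_splits)
      then show ?thesis unfolding vl_def Y'_def by simp
    qed
    have cT: "cntT (bs @ [x]) = a + 1" "cntF (bs @ [x]) = b" using True cnt_app unfolding a_def b_def by simp_all
    have vlast: "vl Y' (bs @ [x]) (length bs) = 1 + y"
      unfolding vl_def Y'_def using True kk_last[of bs x] unfolding a_def by simp
    have vold: "vl Y' (bs @ [x]) i = vl Y bs i" if "i < length bs" for i
      using vl_app[OF that] vlY'[OF that] by simp
    have I1: "Y' k' < Y' k" if "k < k'" "k' < a + 1" for k k'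
    proof (cases "k' = a")
      case True
      then have "Y (a - 1) \<le> Y k" using that Y1'[of k "a - 1"] unfolding a_def by simp
      then show ?thesis using True that ya unfolding Y'_def by simp
    next
      case False
      then show ?thesis using that Y1[of k k'] unfolding Y'_def a_def by simp
    qed
    have I2: "vl Y' (bs @ [x]) j < vl Y' (bs @ [x]) i" if "i < j" "j < length bs + 1" for i j
    proof (cases "j = length bs")
      case True
      then show ?thesis using vlast vold[of i] yv[of i] that by simp
    next
      case False
      then show ?thesis using vold[of i] vold[of j] Y2[of i j] that by simp
    qed
    have I3: "Y' b < vl Y' (bs @ [x]) i" if "i < length bs + 1" for i
    proof (cases "b < a")
      case True
      then have Yb: "Y' b = Y b" unfolding Y'_def by simp
      show ?thesis
      proof (cases "i = length bs")
        case True then show ?thesis using Yb vlast yb \<open>b < a\<close> by simp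
      next
        case False then show ?thesis using Yb vold[of i] Y3[of i] \<open>b < a\<close> that unfolding a_def b_def by simp
      qed
    next
      case False
      then have Yb: "Y' b = y" using ba unfolding Y'_def by simp
      show ?thesis
      proof (cases "i = length bs")
        case True then show ?thesis using Yb vlast by simp
      next
        case False then show ?thesis using Yb vold[of i] yv[of i] that by simp
      qed
    qed
    have I4: "Y' b < Y' a + 1"
    proof (cases "b < a")
      case True then show ?thesis using yb unfolding Y'_def by simp
    next
      case False then show ?thesis using ba unfolding Y'_def by simp
    qed
    have "inv_real Y' (bs @ [x])"
      unfolding inv_real_def cT using I1 I2 I3 I4 by auto
    then show ?thesis by blast
  next
    case False
    have ba': "b < a" using full False cnt_app unfolding a_def b_def by simp
    have cT: "cntT (bs @ [x]) = a" "cntF (bs @ [x]) = b + 1" using False cnt_app unfolding a_def b_def by simp_all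
    have vlast: "vl Y (bs @ [x]) (length bs) = Y b"
      unfolding vl_def using False kk_last[of bs x] unfolding b_def by simp
    have vold: "vl Y (bs @ [x]) i = vl Y bs i" if "i < length bs" for i using vl_app[OF that] .
    have I1: "Y k' < Y k" if "k < k'" "k' < a" for k k' using Y1 that unfolding a_def by simp
    have I2: "vl Y (bs @ [x]) j < vl Y (bs @ [x]) i" if "i < j" "j < length bs + 1" for i j
    proof (cases "j = length bs")
      case True
      then show ?thesis using vlast vold[of i] Y3[of i] ba' that unfolding a_def b_def by simp
    next
      case False
      then show ?thesis using vold[of i] vold[of j] Y2[of i j] that by simp
    qed
    have I3: "Y (b + 1) < vl Y (bs @ [x]) i" if "b + 1 < a" "i < length bs + 1" for i
    proof -
      have lt: "Y (b + 1) < Y b" using Y1[of b "b + 1"] that unfolding a_def by simp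
      show ?thesis
      proof (cases "i = length bs")
        case True then show ?thesis using lt vlast by simp
      next
        case False then show ?thesis using lt vold[of i] Y3[of i] ba' that unfolding a_def b_def by simp
      qed
    qed
    have I4: "Y (b + 1) < Y (a - 1) + 1" if "b + 1 < a"
    proof (cases "b + 1 = a - 1")
      case True then show ?thesis by simp
    next
      case False
      then have "Y (a - 1) \<le> Y (b + 1)" using Y1'[of "b + 1" "a - 1"] that unfolding a_def by simp
      have "Y (b + 1) < Y b" using Y1[of b "b + 1"] that unfolding a_def by simp
      moreover have "Y b < Y (a - 1) + 1" using Y4 ba' unfolding a_def b_def by simp
      ultimately show ?thesis by simp
    qed
    have "inv_real Y (bs @ [x])"
      unfolding inv_real_def cT using I1 I2 I3 I4 by auto
    then show ?thesis by blast
  qed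
qed



lemma two_ne_one: "(2::2) \<noteq> 1" by simp

lemma ballot_realized:
  assumes bs: "bs \<in> ballot CARD('m::finite)"
  shows "\<exists>p c. swp p c (card (AA :: ((real^2) \<times> (real^'m)) set)) \<and> word (p :: nat \<Rightarrow> (real^2) \<times> (real^'m)) = bs"
proof -
  define m where "m = CARD('m)"
  define N where "N = card (AA :: ((real^2) \<times> (real^'m)) set)"
  have NN: "N = 2 * m" unfolding N_def m_def using card_AA by simp
  have len: "length bs = N" and cT: "cntT bs = m" and pre: "\<forall>l\<le>length bs. cntF (take l bs) \<le> cntT (take l bs)"
    using bs NN unfolding ballot_def m_def by auto
  have cF: "cntF bs = m"
  proof -
    have "cntT bs + cntF bs = length bs" unfolding cntT_def cntF_def
      using sum_length_filter_compl[of id bs] by (simp add: comp_def)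
    then show ?thesis using cT len NN by simp
  qed
  obtain Y where Y: "inv_real Y bs" using realize_prefix[OF pre] by blast
  obtain e :: "nat \<Rightarrow> 'm" where e: "bij_betw e {0..<m} UNIV" using ex_bij_betw_nat_finite[of "UNIV :: 'm set"] unfolding m_def by auto
  have kkm: "kk bs i < m" if "i < N" for i using kk_lt[of i bs] that len cT cF by (auto split: if_splits)
  define p :: "nat \<Rightarrow> (real^2) \<times> (real^'m)" where "p i = (axis (if bs ! i then 1 else 2) 1, axis (e (kk bs i)) 1)" for i
  define c :: "(real^2) \<times> (real^'m)" where "c = ((\<chi> a. if a = 1 then 1 else 0), (\<chi> b. Y (inv_into {0..<m} e b)))"
  have cp: "c \<bullet> p i = vl Y bs i" if "i < N" for i
  proof -
    have "inv_into {0..<m} e (e (kk bs i)) = kk bs i"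
      using kkm[OF that] e by (simp add: bij_betw_def inv_into_f_f)
    then show ?thesis unfolding p_def c_def inner_axes vl_def by simp
  qed
  have dec: "c \<bullet> p j < c \<bullet> p i" if "i < j" "j < N" for i j
    using Y that cp[of i] cp[of j] len unfolding inv_real_def by auto
  have injp: "inj_on p {..<N}"
  proof (rule inj_onI)
    fix i j assume "i \<in> {..<N}" "j \<in> {..<N}" "p i = p j"
    then show "i = j" using dec[of i j] dec[of j i] by (cases i j rule: linorder_cases) auto
  qed
  have "p ` {..<N} \<subseteq> AA" unfolding p_def using axes_AA by blast
  moreover have "card (p ` {..<N}) = card (AA :: ((real^2) \<times> (real^'m)) set)" using card_image[OF injp] N_def by simp
  ultimately have "p ` {..<N} = AA" using card_subset_eq[OF finite_AA] by blast
  then have bij: "bij_betw p {..<N} AA" using injp by (simp add: bij_betw_def)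
  have sw: "swp p c N" by (unfold_locales) (use N_def bij dec in auto)
  have N0: "0 < N" using NN unfolding m_def by simp
  have b0: "bs ! 0"
  proof -
    have "cntF (take 1 bs) \<le> cntT (take 1 bs)" using pre N0 len by simp
    moreover have "take 1 bs = [bs ! 0]" using N0 len by (cases bs) auto
    ultimately show ?thesis unfolding cntT_def cntF_def by (cases "bs ! 0") auto
  qed
  have row: "rowof (p i) = (if bs ! i then 1 else 2)" for i unfolding p_def by simp
  have "word p = bs"
  proof (rule nth_equalityI)
    show "length (word p) = length bs" unfolding word_def using len N_def by simp
    fix i assume "i < length (word p)"
    then have i: "i < N" unfolding word_def N_def by simp
    have "word p ! i = (rowof (p i) = rowof (p 0))" unfolding word_def using i N_def by simp
    also have "\<dots> = bs ! i" unfolding row using b0 two_ne_one by (cases "bs ! i") auto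
    finally show "word p ! i = bs ! i" .
  qed
  then show ?thesis using sw N_def by blast
qed



definition BB :: "nat \<Rightarrow> nat \<Rightarrow> bool list set" where
  "BB a b = {bs. cntT bs = a \<and> cntF bs = b \<and> (\<forall>l\<le>length bs. cntF (take l bs) \<le> cntT (take l bs))}"

definition cb :: "nat \<Rightarrow> int \<Rightarrow> int" where
  "cb n k = (if k < 0 then 0 else int (n choose nat k))"

definition FF :: "nat \<Rightarrow> nat \<Rightarrow> int" where
  "FF a b = (if b \<le> a then cb (a + b) (int b) - cb (a + b) (int b - 1) else 0)"

lemma cb_pascal: "cb (Suc n) k = cb n k + cb n (k - 1)"
proof (cases "k < 0")
  case True then show ?thesis unfolding cb_def by simp
next
  case False
  show ?thesis
  proof (cases "k = 0")
    case True then show ?thesis unfolding cb_def by simp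
  next
    case k: False
    then have "nat k = Suc (nat (k - 1))" using False by simp
    then show ?thesis unfolding cb_def using False k by simp
  qed
qed

lemma cnt_len: "cntT bs + cntF bs = length bs"
  unfolding cntT_def cntF_def using sum_length_filter_compl[of id bs] by (simp add: comp_def)

lemma BB_sub: "BB a b \<subseteq> {xs. set xs \<subseteq> UNIV \<and> length xs = a + b}"
  unfolding BB_def using cnt_len by auto

lemma finite_BB: "finite (BB a b)"
  using finite_subset[OF BB_sub finite_lists_length_eq[of UNIV "a + b"]] by simp

lemma snoc_BB: "bs @ [x] \<in> BB a b \<longleftrightarrow>
   b \<le> a \<and> (if x then 0 < a \<and> bs \<in> BB (a - 1) b else 0 < b \<and> bs \<in> BB a (b - 1))"
proof -
  have pre: "(\<forall>l\<le>length (bs @ [x]). cntF (take l (bs @ [x])) \<le> cntT (take l (bs @ [x]))) \<longleftrightarrow>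
     (\<forall>l\<le>length bs. cntF (take l bs) \<le> cntT (take l bs)) \<and> cntF (bs @ [x]) \<le> cntT (bs @ [x])"
  proof
    assume h: "\<forall>l\<le>length (bs @ [x]). cntF (take l (bs @ [x])) \<le> cntT (take l (bs @ [x]))"
    show "(\<forall>l\<le>length bs. cntF (take l bs) \<le> cntT (take l bs)) \<and> cntF (bs @ [x]) \<le> cntT (bs @ [x])"
    proof (intro conjI allI impI)
      fix l assume "l \<le> length bs" then show "cntF (take l bs) \<le> cntT (take l bs)" using h[rule_format, of l] by simp
    next
      show "cntF (bs @ [x]) \<le> cntT (bs @ [x])" using h[rule_format, of "length (bs @ [x])"] by simp
    qed
  next
    assume h: "(\<forall>l\<le>length bs. cntF (take l bs) \<le> cntT (take l bs)) \<and> cntF (bs @ [x]) \<le> cntT (bs @ [x])"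
    show "\<forall>l\<le>length (bs @ [x]). cntF (take l (bs @ [x])) \<le> cntT (take l (bs @ [x]))"
    proof (intro allI impI)
      fix l assume l: "l \<le> length (bs @ [x])"
      show "cntF (take l (bs @ [x])) \<le> cntT (take l (bs @ [x]))"
      proof (cases "l = length (bs @ [x])")
        case True then show ?thesis using h by simp
      next
        case False then show ?thesis using h l by simp
      qed
    qed
  qed
  show ?thesis unfolding BB_def mem_Collect_eq pre cnt_app by (cases x) auto
qed

lemma BB_card: "int (card (BB a b)) = FF a b"
proof (induction "a + b" arbitrary: a b)
  case 0
  then have ab: "a = 0" "b = 0" by auto
  have "BB 0 0 = {[]}"
  proof (intro equalityI subsetI)
    fix bs assume "bs \<in> BB 0 0" then have "length bs = 0" unfolding BB_def using cnt_len[of bs] by simp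
    then show "bs \<in> {[]}" by simp
  qed (auto simp: BB_def cntT_def cntF_def)
  then show ?case using ab unfolding FF_def cb_def by simp
next
  case (Suc n)
  show ?case
  proof (cases "b \<le> a")
    case False
    have "BB a b = {}"
    proof (intro equalityI subsetI)
      fix bs assume "bs \<in> BB a b"
      then show "bs \<in> {}" using False unfolding BB_def by (auto dest: spec[of _ "length bs"])
    qed simp
    then show ?thesis using False unfolding FF_def by simp
  next
    case ba: True
    have a0: "0 < a" using Suc.hyps(2) ba by simp
    define L where "L = (\<lambda>bs. bs @ [True]) ` BB (a - 1) b"
    define R where "R = (if 0 < b then (\<lambda>bs. bs @ [False]) ` BB a (b - 1) else {})"
    have eq: "BB a b = L \<union> R"
    proof (intro equalityI subsetI)
      fix bs assume bs: "bs \<in> BB a b"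
      then have "bs \<noteq> []" using Suc.hyps(2) cnt_len[of bs] unfolding BB_def by auto
      then obtain ys x where ys: "bs = ys @ [x]" by (metis rev_exhaust)
      show "bs \<in> L \<union> R" using bs unfolding ys snoc_BB L_def R_def by (cases x) auto
    next
      fix bs assume "bs \<in> L \<union> R"
      then show "bs \<in> BB a b" unfolding L_def R_def using snoc_BB ba a0 by (auto split: if_splits)
    qed
    have disj: "L \<inter> R = {}" unfolding L_def R_def by auto
    have cL: "card L = card (BB (a - 1) b)" unfolding L_def by (rule card_image) (simp add: inj_on_def)
    have cR: "card R = (if 0 < b then card (BB a (b - 1)) else 0)" unfolding R_def by (simp add: card_image inj_on_def)
    have finLR: "finite L" "finite R" unfolding L_def R_def using finite_BB by auto
    have "int (card (BB a b)) = int (card L) + int (card R)" unfolding eq using card_Un_disjoint[OF finLR disj] by simp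
    also have "\<dots> = FF (a - 1) b + (if 0 < b then FF a (b - 1) else 0)"
      using Suc.hyps(1)[of "a - 1" b] Suc.hyps(1)[of a "b - 1"] Suc.hyps(2) a0 cL cR by auto
    also have "\<dots> = FF a b"
    proof (cases "b = 0")
      case True then show ?thesis unfolding FF_def cb_def by simp
    next
      case b0: False
      define m where "m = a + b - 1"
      have m: "a + b = Suc m" "a - 1 + b = m" "a + (b - 1) = m" unfolding m_def using a0 b0 by auto
      have f1: "FF (a - 1) b = cb m (int b) - cb m (int b - 1)"
      proof (cases "b \<le> a - 1")
        case True then show ?thesis unfolding FF_def m by simp
      next
        case False
        then have "b = a" using ba by simp
        then have "m - nat (int b) = nat (int b - 1)" using m a0 by simp
        then have "cb m (int b) = cb m (int b - 1)" unfolding cb_def using binomial_symmetric[of "nat (int b)" m] m \<open>b = a\<close>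
          by auto
        then show ?thesis unfolding FF_def using False by simp
      qed
      have "b - 1 \<le> a" using ba by simp
      then have f2: "FF a (b - 1) = cb m (int b - 1) - cb m (int b - 2)"
        unfolding FF_def m using b0 by (simp add: of_nat_diff)
      have f3: "FF a b = cb (Suc m) (int b) - cb (Suc m) (int b - 1)"
        unfolding FF_def m(1)[symmetric] using ba by simp
      show ?thesis using f1 f2 f3 b0 cb_pascal[of m "int b"] cb_pascal[of m "int b - 1"] by simp
    qed
    finally show ?thesis .
  qed
qed

lemma ballot_BB: "ballot m = BB m m"
  unfolding ballot_def BB_def
proof (rule Collect_cong)
  fix bs :: "bool list"
  show "(length bs = 2 * m \<and> cntT bs = m \<and> (\<forall>l\<le>length bs. cntF (take l bs) \<le> cntT (take l bs))) =
        (cntT bs = m \<and> cntF bs = m \<and> (\<forall>l\<le>length bs. cntF (take l bs) \<le> cntT (take l bs)))"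
    using cnt_len[of bs] by auto
qed

lemma card_ballot: "real (card (ballot m)) = catalan m"
proof -
  have c: "int (card (ballot m)) = cb (2 * m) (int m) - cb (2 * m) (int m - 1)"
    unfolding ballot_BB BB_card FF_def by (simp add: mult_2)
  show ?thesis
  proof (cases "m = 0")
    case True
    then show ?thesis using c unfolding cb_def catalan_def by simp
  next
    case False
    have e1: "cb (2 * m) (int m) = int (2 * m choose m)" unfolding cb_def by simp
    have e2: "cb (2 * m) (int m - 1) = int (2 * m choose (m - 1))" unfolding cb_def using False by (simp add: nat_diff_distrib)
    have id: "Suc (m - 1) * (Suc (m - 1 + m) choose Suc (m - 1)) = Suc m * (Suc (m - 1 + m) choose (m - 1))"
      by (rule Suc_times_binomial_add)
    then have id2: "m * (2 * m choose m) = (m + 1) * (2 * m choose (m - 1))" using False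
      by (simp add: mult_2)
    define C where "C = real (2 * m choose m)"
    define D where "D = real (2 * m choose (m - 1))"
    have hX: "real (card (ballot m)) = C - D"
      using c e1 e2 unfolding C_def D_def by linarith
    have hD: "real m * C = (real m + 1) * D"
      using arg_cong[OF id2, of real] unfolding C_def D_def by (simp only: of_nat_mult of_nat_add of_nat_1)
    have "(C - D) * (real m + 1) = C"
      using hD by (simp add: algebra_simps)
    then have "C - D = C / (real m + 1)" by (simp add: field_simps)
    then show ?thesis unfolding catalan_def hX C_def by simp
  qed
qed



lemma card_eq_by_kernel:
  assumes "\<And>x y. x \<in> V \<Longrightarrow> y \<in> V \<Longrightarrow> f x = f y \<longleftrightarrow> h x = h y"
  shows "card (f ` V) = card (h ` V)"
proof -
  define k where "k z = h (inv_into V f z)" for z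
  have ki: "k (f x) = h x" if "x \<in> V" for x
  proof -
    have "inv_into V f (f x) \<in> V" "f (inv_into V f (f x)) = f x"
      using that by (auto intro: inv_into_into f_inv_into_f)
    then show ?thesis unfolding k_def using assms that by blast
  qed
  have "inj_on k (f ` V)"
  proof (rule inj_onI)
    fix z1 z2 assume "z1 \<in> f ` V" "z2 \<in> f ` V" "k z1 = k z2"
    then obtain x1 x2 where "x1 \<in> V" "x2 \<in> V" "z1 = f x1" "z2 = f x2" "h x1 = h x2" using ki by auto
    then show "z1 = z2" using assms by blast
  qed
  moreover have "k ` (f ` V) = h ` V" using ki by (auto simp: image_iff)
  ultimately show ?thesis using card_image[of k "f ` V"] by simp
qed

lemma orbit_shift:
  fixes g :: "(2 \<Rightarrow> 2) \<times> ('m::finite \<Rightarrow> 'm)"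
  assumes g: "g \<in> perm_group"
  shows "(\<lambda>h. perm_act h (perm_act g v)) ` perm_group = (\<lambda>h. perm_act h v) ` (perm_group :: ((2 \<Rightarrow> 2) \<times> ('m \<Rightarrow> 'm)) set)"
proof -
  obtain s t where st: "g = (s, t)" "s permutes UNIV" "t permutes UNIV" using g unfolding perm_group_def by auto
  show ?thesis
  proof (intro equalityI subsetI)
    fix x assume "x \<in> (\<lambda>h. perm_act h (perm_act g v)) ` perm_group"
    then obtain s2 t2 where h: "s2 permutes UNIV" "t2 permutes UNIV" "x = perm_act (s2, t2) (perm_act g v)"
      unfolding perm_group_def by auto
    then have "x = perm_act (s \<circ> s2, t \<circ> t2) v" using st perm_act_comp by simp
    moreover have "(s \<circ> s2, t \<circ> t2) \<in> perm_group" unfolding perm_group_def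
      using permutes_compose[OF h(1) st(2)] permutes_compose[OF h(2) st(3)] by simp
    ultimately show "x \<in> (\<lambda>h. perm_act h v) ` perm_group" by blast
  next
    fix x assume "x \<in> (\<lambda>h. perm_act h v) ` perm_group"
    then obtain s2 t2 where h: "s2 permutes UNIV" "t2 permutes UNIV" "x = perm_act (s2, t2) v"
      unfolding perm_group_def by auto
    have eqs: "s \<circ> (inv s \<circ> s2) = s2" "t \<circ> (inv t \<circ> t2) = t2"
      using permutes_inverses(1)[OF st(2)] permutes_inverses(1)[OF st(3)] by (auto simp: fun_eq_iff)
    have "perm_act (inv s \<circ> s2, inv t \<circ> t2) (perm_act g v) = perm_act (s \<circ> (inv s \<circ> s2), t \<circ> (inv t \<circ> t2)) v"
      by (simp only: st(1) perm_act_comp)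
    also have "\<dots> = x" by (simp only: eqs h(3))
    finally have "x = perm_act (inv s \<circ> s2, inv t \<circ> t2) (perm_act g v)" by simp
    moreover have "(inv s \<circ> s2, inv t \<circ> t2) \<in> perm_group"
      unfolding perm_group_def
      using permutes_compose[OF h(1) permutes_inv[OF st(2)]] permutes_compose[OF h(2) permutes_inv[OF st(3)]] by simp
    ultimately show "x \<in> (\<lambda>h. perm_act h (perm_act g v)) ` perm_group" by blast
  qed
qed

lemma gsweep_swp: "gsweep AA p \<longleftrightarrow> (\<exists>c. swp p c (card (AA :: ((real^2) \<times> (real^'m::finite)) set)))"
  for p :: "nat \<Rightarrow> (real^2) \<times> (real^'m::finite)"
  unfolding gsweep_def swp_def by auto

lemma gpt_perm: "perm_act g (gpt AA w p) = gpt AA w (perm_act g \<circ> p)"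
  unfolding gpt_def perm_act_sum by simp

theorem main:
  fixes w :: "nat \<Rightarrow> real"
  assumes w: "admissible_weights (card (prod_simplex_vertices :: ((real^2) \<times> (real^'m::finite)) set)) w"
  defines "V \<equiv> {v. v extreme_point_of
                   sweep_polytope (prod_simplex_vertices :: ((real^2) \<times> (real^'m)) set) w}"
  shows "(\<forall>g\<in>perm_group. \<forall>v\<in>V. perm_act g v \<in> V)
       \<and> real (card ((\<lambda>v. (\<lambda>g. perm_act g v) ` perm_group) ` V)) = catalan (CARD('m))"
proof -
  define N where "N = card (AA :: ((real^2) \<times> (real^'m)) set)"
  obtain g0 :: "(real^2) \<times> (real^'m)" where g0: "inj_on (\<lambda>u. g0 \<bullet> u) AA" using generic_functional by blast
  have VV: "V = gpt AA w ` {p. gsweep AA p}" unfolding V_def using extreme_points_eq[OF finite_AA w g0] .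
  have part1: "\<forall>g\<in>perm_group. \<forall>v\<in>V. perm_act g v \<in> V"
  proof (intro ballI)
    fix g :: "(2 \<Rightarrow> 2) \<times> ('m \<Rightarrow> 'm)" and v assume g: "g \<in> perm_group" and v: "v \<in> V"
    obtain p where p: "gsweep AA p" "v = gpt AA w p" using v VV by blast
    obtain c where c: "swp p c N" using p gsweep_swp N_def by blast
    have "swp (perm_act g \<circ> p) (perm_act g c) N" using word_invariant(1)[OF c g] .
    then have "gsweep AA (perm_act g \<circ> p)" using gsweep_swp N_def by blast
    then show "perm_act g v \<in> V" unfolding VV p(2) gpt_perm by blast
  qed
  define wd where "wd (v :: (real^2) \<times> (real^'m)) = word (SOME p. gsweep AA p \<and> gpt AA w p = v)" for v
  have wd_gpt: "wd (gpt AA w p) = word p" if p: "gsweep AA p" for p :: "nat \<Rightarrow> (real^2) \<times> (real^'m)"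
  proof -
    define q where "q = (SOME q. gsweep AA q \<and> gpt AA w q = gpt AA w p)"
    have q: "gsweep AA q \<and> gpt AA w q = gpt AA w p" unfolding q_def by (rule someI[of _ p]) (simp add: p)
    have qb: "bij_betw q {..<N} AA" using q unfolding gsweep_def N_def by blast
    have eq: "\<forall>i<N. q i = p i" using sweep_unique[OF finite_AA w p] qb q unfolding N_def by blast
    have N0: "0 < N" unfolding N_def using card_AA[where 'm='m] by simp
    have "word q = word p" unfolding word_def using eq N0 N_def by (intro map_cong) auto
    then show ?thesis unfolding wd_def q_def by simp
  qed
  define Orb where "Orb v = (\<lambda>g. perm_act g v) ` (perm_group :: ((2 \<Rightarrow> 2) \<times> ('m \<Rightarrow> 'm)) set)" for v
  have idG: "(id, id) \<in> (perm_group :: ((2 \<Rightarrow> 2) \<times> ('m \<Rightarrow> 'm)) set)" unfolding perm_group_def by (auto intro: permutes_id)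
  have key: "Orb v = Orb v' \<longleftrightarrow> wd v = wd v'" if v: "v \<in> V" and v': "v' \<in> V" for v v'
  proof -
    obtain p where p: "gsweep AA p" "v = gpt AA w p" using v VV by blast
    obtain p' where p': "gsweep AA p'" "v' = gpt AA w p'" using v' VV by blast
    obtain c where c: "swp p c N" using p gsweep_swp N_def by blast
    obtain c' where c': "swp p' c' N" using p' gsweep_swp N_def by blast
    show ?thesis
    proof
      assume "Orb v = Orb v'"
      moreover have "v' \<in> Orb v'" unfolding Orb_def
        by (rule image_eqI[where f="\<lambda>g. perm_act g v'", OF _ idG]) (simp add: perm_act_id)
      ultimately have "v' \<in> Orb v" by simp
      then obtain g where g: "g \<in> perm_group" "v' = perm_act g v" unfolding Orb_def by blast
      have s: "swp (perm_act g \<circ> p) (perm_act g c) N" using word_invariant(1)[OF c g(1)] .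
      then have gs: "gsweep AA (perm_act g \<circ> p)" using gsweep_swp N_def by blast
      have "wd v' = word (perm_act g \<circ> p)" unfolding g(2) p(2) gpt_perm using wd_gpt[OF gs] .
      also have "\<dots> = word p" using word_invariant(2)[OF c g(1)] .
      also have "\<dots> = wd v" using wd_gpt[OF p(1)] p(2) by simp
      finally show "wd v = wd v'" by simp
    next
      assume "wd v = wd v'"
      then have "word p = word p'" using wd_gpt[OF p(1)] wd_gpt[OF p'(1)] p(2) p'(2) by simp
      then obtain g where g: "g \<in> perm_group" "\<forall>i<N. p' i = perm_act g (p i)" using word_complete[OF c c'] by blast
      have "v' = perm_act g v" unfolding p(2) p'(2) gpt_perm using g(2) N_def by (intro gpt_cong) auto
      then show "Orb v = Orb v'" unfolding Orb_def using orbit_shift[OF g(1)] by simp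
    qed
  qed
  have img: "wd ` V = ballot CARD('m)"
  proof (intro equalityI subsetI)
    fix bs assume "bs \<in> wd ` V"
    then obtain p where p: "gsweep AA p" "bs = wd (gpt AA w p)" using VV by blast
    obtain c where c: "swp p c N" using p gsweep_swp N_def by blast
    show "bs \<in> ballot CARD('m)" using swp.word_ballot[OF c] wd_gpt[OF p(1)] p(2) by simp
  next
    fix bs assume bs: "bs \<in> ballot CARD('m)"
    obtain p :: "nat \<Rightarrow> (real^2) \<times> (real^'m)" and c where pc: "swp p c N" "word p = bs"
      using ballot_realized[OF bs] N_def by blast
    have gs: "gsweep AA p" using pc gsweep_swp N_def by blast
    then have "gpt AA w p \<in> V" using VV by blast
    moreover have "wd (gpt AA w p) = bs" using wd_gpt[OF gs] pc by simp
    ultimately show "bs \<in> wd ` V" by blast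
  qed
  have "card (Orb ` V) = card (wd ` V)" using key by (intro card_eq_by_kernel) auto
  then have "real (card (Orb ` V)) = catalan CARD('m)" using img card_ballot by simp
  then show ?thesis using part1 unfolding Orb_def by simp
qed


theorem corollary2p7:
  fixes w :: "nat \<Rightarrow> real"
  assumes f_ge_1: "CARD('m::finite) \<ge> 2"
    and w: "admissible_weights (card (prod_simplex_vertices :: ((real^2) \<times> (real^'m)) set)) w"
  defines "V \<equiv> {v. v extreme_point_of
                   sweep_polytope (prod_simplex_vertices :: ((real^2) \<times> (real^'m)) set) w}"
  shows "(\<forall>g\<in>perm_group. \<forall>v\<in>V. perm_act g v \<in> V)
       \<and> real (card ((\<lambda>v. (\<lambda>g. perm_act g v) ` perm_group) ` V)) = catalan (CARD('m))"
  unfolding V_def by (rule main[OF w])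

end
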